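(* Assume (STAB). Then for any $\Omega\subseteq\Lambda$ the deformation $y\equiv0$ is a strongly stable equilibrium of $E^\Omega$. Precisely, for all $v\in\mathscr W_0(\Omega)$, $$\langle\delta^2E^\Omega(0)v,v\rangle=\psi''(0)\sum_{b\in\mathcal B^\Omega}Dv_b^2,\qquad\text{and}\qquad \psi''(0)\ge\lambda_d>0.$$
   Context: Lattice $\Lambda:=\tfrac{a_1+a_2}{3}+\{ma_1+na_2:m,n\in\mathbb Z\}$ with $a_1=(1,0)^T$, $a_2=(\tfrac12,\tfrac{\sqrt3}2)^T$; bonds $\mathcal B$ are oriented nearest-neighbour pairs; $\mathcal B^\Omega$ those with both endpoints in $\Omega$. $\mathscr W(\Omega)$: functions $\Omega\to\mathbb R$; $Dy_b:=y(\eta)-y(\xi)$ for $b=(\xi,\eta)$; $\xi_0=(0,\sqrt3/3)^T$; $\mathscr W_0(\Omega)=\{v:v(\xi_0)=0,\ \mathrm{supp}(Dv)\text{ bounded}\}$; $\dot{\mathscr W}^{1,2}(\Omega)=\{v:v(\xi_0)=0,\ Dv\in\ell^2\}$. $\psi\in C^4(\mathbb R)$, $1$-periodic and even; $E^\Omega(y;\tilde y):=\sum_{b\in\mathcal B^\Omega}[\psi(Dy_b)-\psi(D\tilde y_b)]$; $\langle\delta^2E^\Omega(y)v,w\rangle:=\sum_{b\in\mathcal B^\Omega}\psi''(Dy_b)Dv_bDw_b$; $E:=E^\Lambda$. A locally stable equilibrium is $y$ with $E^\Omega(y+u;y)\ge0$ for all $u\in\mathscr W_0(\Omega)$ with $\|Du\|_{\ell^2}\le\epsilon$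 for some $\epsilon>0$; it is strongly stable if additionally $\langle\delta^2E^\Omega(y)v,v\rangle\ge\lambda\|Dv\|_{\ell^2}^2$ for all $v\in\mathscr W_0(\Omega)$, some $\lambda>0$. $\hat y(x):=\frac1{2\pi}\arg(x)$ (branch cut on the positive $x_1$-axis) as a function on $\Lambda$. (STAB): there is $u\in\dot{\mathscr W}^{1,2}(\Lambda)$ with $\hat y+u$ a strongly stable equilibrium of $E$; $\lambda_d$ denotes its strong stability constant $\lambda$. *)

theory Defs
  imports "HOL-Analysis.Analysis"
begin

text \<open>Points of R^2 are represented as complex numbers (x1 + i x2).
  Deformations are functions complex => real; only their values on the
  relevant set matter (plus the normalisation at xi0).\<close>

definition a1 :: complex where "a1 = 1"
definition a2 :: complex where "a2 = Complex (1/2) (sqrt 3 / 2)"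

definition Lat :: "complex set" where
  "Lat = {(a1 + a2) / 3 + of_int m * a1 + of_int n * a2 | m n :: int. True}"

text \<open>Oriented nearest-neighbour bonds with both endpoints in Omega
  (nearest-neighbour distance of the lattice is 1).\<close>
definition bonds :: "complex set \<Rightarrow> (complex \<times> complex) set" where
  "bonds \<Omega> = {(\<xi>, \<eta>). \<xi> \<in> \<Omega> \<and> \<eta> \<in> \<Omega> \<and> \<xi> \<in> Lat \<and> \<eta> \<in> Lat \<and> cmod (\<eta> - \<xi>) = 1}"

definition Dif :: "(complex \<Rightarrow> real) \<Rightarrow> complex \<times> complex \<Rightarrow> real" where
  "Dif y b = y (snd b) - y (fst b)"

definition xi0 :: complex where "xi0 = Complex 0 (sqrt 3 / 3)"

definition W0 :: "complex set \<Rightarrow> (complex \<Rightarrow> real) set" where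
  "W0 \<Omega> = {v. v xi0 = 0 \<and> bounded (fst ` {b \<in> bonds \<Omega>. Dif v b \<noteq> 0})}"

definition W12 :: "complex set \<Rightarrow> (complex \<Rightarrow> real) set" where
  "W12 \<Omega> = {v. v xi0 = 0 \<and> (\<lambda>b. (Dif v b)\<^sup>2) summable_on bonds \<Omega>}"

definition l2sq :: "complex set \<Rightarrow> (complex \<Rightarrow> real) \<Rightarrow> real" where
  "l2sq \<Omega> v = (\<Sum>\<^sub>\<infinity>b\<in>bonds \<Omega>. (Dif v b)\<^sup>2)"

definition C4 :: "(real \<Rightarrow> real) \<Rightarrow> bool" where
  "C4 f \<longleftrightarrow> (\<forall>k<4. \<forall>x. ((deriv ^^ k) f) differentiable (at x))
            \<and> continuous_on UNIV ((deriv ^^ 4) f)"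

definition psi2 :: "(real \<Rightarrow> real) \<Rightarrow> real \<Rightarrow> real" where
  "psi2 \<psi> = deriv (deriv \<psi>)"

definition Ediff :: "(real \<Rightarrow> real) \<Rightarrow> complex set \<Rightarrow> (complex \<Rightarrow> real) \<Rightarrow> (complex \<Rightarrow> real) \<Rightarrow> real" where
  "Ediff \<psi> \<Omega> y y' = (\<Sum>\<^sub>\<infinity>b\<in>bonds \<Omega>. \<psi> (Dif y b) - \<psi> (Dif y' b))"

definition hess :: "(real \<Rightarrow> real) \<Rightarrow> complex set \<Rightarrow> (complex \<Rightarrow> real) \<Rightarrow> (complex \<Rightarrow> real) \<Rightarrow> (complex \<Rightarrow> real) \<Rightarrow> real" where
  "hess \<psi> \<Omega> y v w = (\<Sum>\<^sub>\<infinity>b\<in>bonds \<Omega>. psi2 \<psi> (Dif y b) * Dif v b * Dif w b)"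

definition locally_stable :: "(real \<Rightarrow> real) \<Rightarrow> complex set \<Rightarrow> (complex \<Rightarrow> real) \<Rightarrow> bool" where
  "locally_stable \<psi> \<Omega> y \<longleftrightarrow>
     (\<exists>\<epsilon>>0. \<forall>u\<in>W0 \<Omega>. sqrt (l2sq \<Omega> u) \<le> \<epsilon> \<longrightarrow> Ediff \<psi> \<Omega> (\<lambda>x. y x + u x) y \<ge> 0)"

definition strongly_stable_with :: "(real \<Rightarrow> real) \<Rightarrow> complex set \<Rightarrow> (complex \<Rightarrow> real) \<Rightarrow> real \<Rightarrow> bool" where
  "strongly_stable_with \<psi> \<Omega> y lam \<longleftrightarrow> locally_stable \<psi> \<Omega> y \<and> lam > 0 \<and>
     (\<forall>v\<in>W0 \<Omega>. hess \<psi> \<Omega> y v v \<ge> lam * l2sq \<Omega> v)"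

definition strongly_stable :: "(real \<Rightarrow> real) \<Rightarrow> complex set \<Rightarrow> (complex \<Rightarrow> real) \<Rightarrow> bool" where
  "strongly_stable \<psi> \<Omega> y \<longleftrightarrow> (\<exists>lam. strongly_stable_with \<psi> \<Omega> y lam)"

text \<open>arg with branch cut on the positive x1-axis, values in [0, 2 pi).\<close>
definition yhat :: "complex \<Rightarrow> real" where
  "yhat x = (if Arg x \<ge> 0 then Arg x else Arg x + 2 * pi) / (2 * pi)"

end

theory Submission imports Defs begin

lemma deriv_periodic:
  assumes "\<And>x. f (x + 1) = (f x :: real)"
  shows "deriv f (x + 1) = deriv f x"
proof -
  have "(\<lambda>t. f (t + 1)) = f" using assms by auto
  hence "\<And>D. DERIV f (x + 1) :> D \<longleftrightarrow> DERIV f x :> D"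
    using DERIV_shift[of f _ x 1] by simp
  thus ?thesis unfolding deriv_def by simp
qed

lemma psi2_periodic1:
  assumes "\<And>x. f (x + 1) = (f x :: real)"
  shows "psi2 f (x + 1) = psi2 f x"
  unfolding psi2_def
  by (rule deriv_periodic, rule deriv_periodic, rule assms)

lemma psi2_periodic_nat:
  assumes "\<And>x. f (x + 1) = (f x :: real)"
  shows "psi2 f (x + of_nat n) = psi2 f x"
proof (induction n arbitrary: x)
  case 0 then show ?case by simp
next
  case (Suc n)
  have "psi2 f (x + of_nat (Suc n)) = psi2 f ((x + of_nat n) + 1)" by (simp add: algebra_simps)
  also have "\<dots> = psi2 f (x + of_nat n)" by (rule psi2_periodic1) (rule assms)
  finally show ?case using Suc by simp
qed

lemma psi2_periodic_int:
  assumes "\<And>x. f (x + 1) = (f x :: real)"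
  shows "psi2 f (x + of_int k) = psi2 f x"
proof (cases "k \<ge> 0")
  case True
  then have e: "(of_nat (nat k) :: real) = of_int k" by simp
  show ?thesis using psi2_periodic_nat[of f x "nat k", OF assms] unfolding e .
next
  case False
  then have k: "(of_nat (nat (-k)) :: real) = - of_int k" by simp
  have "psi2 f ((x + of_int k) + of_nat (nat (-k))) = psi2 f (x + of_int k)"
    by (rule psi2_periodic_nat) (rule assms)
  then show ?thesis unfolding k by simp
qed

lemma psi2_cont:
  assumes "C4 f"
  shows "isCont (psi2 f) x"
proof -
  have "((deriv ^^ 2) f) differentiable (at x)" using assms unfolding C4_def by auto
  hence "(psi2 f) differentiable (at x)" by (simp add: psi2_def numeral_2_eq_2)
  thus ?thesis by (simp add: differentiable_imp_continuous_within)
qed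

lemma lat_finite: "finite (Lat \<inter> cball 0 R)"
proof -
  define K where "K = \<lceil>4 * R + 4\<rceil>"
  define P where "P = (\<lambda>(m::int, n::int). (a1 + a2) / 3 + of_int m * a1 + of_int n * a2)"
  have "Lat \<inter> cball 0 R \<subseteq> P ` ({-K..K} \<times> {-K..K})"
  proof
    fix p assume p: "p \<in> Lat \<inter> cball 0 R"
    then obtain m n :: int where pe: "p = (a1 + a2) / 3 + of_int m * a1 + of_int n * a2"
      unfolding Lat_def by auto
    have re: "Re p = 1/2 + m + n/2" using pe by (simp add: a1_def a2_def)
    have im: "Im p = sqrt 3 / 6 + n * sqrt 3 / 2" using pe by (simp add: a1_def a2_def)
    have nR: "norm p \<le> R" using p by auto
    have "\<bar>Re p\<bar> \<le> R" "\<bar>Im p\<bar> \<le> R" using abs_Re_le_cmod abs_Im_le_cmod nR by (meson order.trans)+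
    have s3a: "sqrt 1 \<le> sqrt 3" by (rule real_sqrt_le_mono) simp
    have s3b: "sqrt 3 \<le> sqrt 4" by (rule real_sqrt_le_mono) simp
    have s4: "sqrt 4 = 2" by (simp add: real_sqrt_unique[of 2])
    have s3: "1 \<le> sqrt 3" "sqrt 3 \<le> 2" using s3a s3b s4 by auto
    have ni: "real_of_int n * sqrt 3 / 2 = Im p - sqrt 3 / 6" using im by simp
    have "\<bar>real_of_int n * sqrt 3 / 2\<bar> \<le> R + 1"
      unfolding ni using \<open>\<bar>Im p\<bar> \<le> R\<close> s3 by linarith
    hence "\<bar>real_of_int n\<bar> * sqrt 3 \<le> 2 * R + 2" by (simp add: abs_mult)
    moreover have "\<bar>real_of_int n\<bar> \<le> \<bar>real_of_int n\<bar> * sqrt 3"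
      using s3 mult_left_mono[of 1 "sqrt 3" "\<bar>real_of_int n\<bar>"] by simp
    ultimately have nb: "\<bar>real_of_int n\<bar> \<le> 2 * R + 2" by linarith
    have mb: "\<bar>real_of_int m\<bar> \<le> 3 * R + 3" using \<open>\<bar>Re p\<bar> \<le> R\<close> re nb by linarith
    have "\<bar>n\<bar> \<le> K" "\<bar>m\<bar> \<le> K" using nb mb unfolding K_def by linarith+
    thus "p \<in> P ` ({-K..K} \<times> {-K..K})" unfolding P_def using pe
      by (auto intro!: image_eqI[where x="(m,n)"])
  qed
  thus ?thesis by (rule finite_subset) auto
qed

lemma yhat_split: "\<exists>j::int. yhat z = Arg z / (2*pi) + j"
proof (cases "Arg z \<ge> 0")
  case True thus ?thesis by (intro exI[of _ 0]) (simp add: yhat_def)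
next
  case False thus ?thesis by (intro exI[of _ 1]) (simp add: yhat_def field_simps)
qed

lemma yhat_diff:
  assumes "\<xi> \<noteq> 0" "\<eta> \<noteq> 0"
  shows "\<exists>k::int. yhat \<eta> - yhat \<xi> = Arg (\<eta> / \<xi>) / (2*pi) + k"
proof -
  have e: "\<eta> = \<xi> * (\<eta> / \<xi>)" using assms by simp
  have "\<exists>c::int. Arg \<eta> = Arg \<xi> + Arg (\<eta> / \<xi>) + 2*pi*c"
  proof -
    have "Arg (\<xi> * (\<eta> / \<xi>)) = Arg \<xi> + Arg (\<eta> / \<xi>) + (if Arg \<xi> + Arg (\<eta> / \<xi>) \<in> {-pi<..pi} then 0 else if Arg \<xi> + Arg (\<eta> / \<xi>) > pi then -2*pi else 2*pi)"
      using Arg_times'[of \<xi> "\<eta> / \<xi>"] assms by simp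
    thus ?thesis using e
      by (cases "Arg \<xi> + Arg (\<eta> / \<xi>) \<in> {-pi<..pi}"; cases "Arg \<xi> + Arg (\<eta> / \<xi>) > pi")
         (auto intro: exI[of _ 0] exI[of _ 1] exI[of _ "-1"])
  qed
  then obtain c :: int where c: "Arg \<eta> = Arg \<xi> + Arg (\<eta> / \<xi>) + 2*pi*c" by blast
  obtain j1 :: int where j1: "yhat \<eta> = Arg \<eta> / (2*pi) + j1" using yhat_split by blast
  obtain j2 :: int where j2: "yhat \<xi> = Arg \<xi> / (2*pi) + j2" using yhat_split by blast
  have "yhat \<eta> - yhat \<xi> = Arg (\<eta> / \<xi>) / (2*pi) + (c + j1 - j2)"
    using j1 j2 c by (simp add: field_simps)
  thus ?thesis by blast
qed

lemma near_int:
  assumes "\<delta> > 0"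
  shows "\<exists>R>0. \<forall>\<xi> \<eta>. norm \<xi> \<ge> R \<longrightarrow> norm (\<eta> - \<xi>) = 1 \<longrightarrow> (\<exists>k::int. \<bar>yhat \<eta> - yhat \<xi> - k\<bar> < \<delta>)"
proof -
  have "(1::complex) \<notin> \<real>\<^sub>\<le>\<^sub>0" by (simp add: nonpos_Reals_def)
  hence "continuous (at 1) Arg" by (rule continuous_at_Arg)
  then obtain \<rho> where \<rho>: "\<rho> > 0" "\<And>z. dist z 1 < \<rho> \<Longrightarrow> dist (Arg z) (Arg 1) < 2*pi*\<delta>"
    unfolding continuous_at_eps_delta using assms by (metis mult_pos_pos pi_gt_zero zero_less_numeral)
  have rp: "2/\<rho> > 0" using \<rho> by simp
  have A1: "Arg 1 = 0" using Arg_of_real[of 1] by simp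
  show ?thesis
  proof (intro exI[of _ "2/\<rho> + 2"] conjI allI impI)
    show "2/\<rho> + 2 > 0" using rp by linarith
    fix \<xi> \<eta> :: complex
    assume n0: "norm \<xi> \<ge> 2/\<rho> + 2" "norm (\<eta> - \<xi>) = 1"
    have n: "norm \<xi> \<ge> 2/\<rho>" "norm (\<eta> - \<xi>) = 1" using n0 rp by auto
    have "norm \<xi> \<le> norm \<eta> + norm (\<eta> - \<xi>)" by (metis norm_triangle_sub norm_minus_commute)
    hence en: "\<eta> \<noteq> 0" using n0 rp by (cases "\<eta> = 0") auto
    have xn: "\<xi> \<noteq> 0" using n \<rho> by auto
    have "norm \<xi> > 1/\<rho>" using n \<rho> by (smt (verit) divide_strict_right_mono)
    hence "1 / norm \<xi> < \<rho>" using \<rho> xn by (simp add: field_simps)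
    have "\<eta> / \<xi> - 1 = (\<eta> - \<xi>) / \<xi>" using xn by (simp add: field_simps)
    hence "dist (\<eta> / \<xi>) 1 = 1 / norm \<xi>" using n by (simp add: dist_norm norm_divide)
    hence "\<bar>Arg (\<eta> / \<xi>)\<bar> < 2*pi*\<delta>" using \<rho>(2)[of "\<eta> / \<xi>"] \<open>1 / norm \<xi> < \<rho>\<close> A1
      by (simp add: dist_real_def)
    hence sm: "\<bar>Arg (\<eta> / \<xi>) / (2*pi)\<bar> < \<delta>" by (simp add: field_simps)
    show "\<exists>k::int. \<bar>yhat \<eta> - yhat \<xi> - k\<bar> < \<delta>"
    proof -
      obtain k :: int where "yhat \<eta> - yhat \<xi> = Arg (\<eta> / \<xi>) / (2*pi) + k"
        using yhat_diff xn en by blast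
      thus ?thesis using sm by (intro exI[of _ k]) simp
    qed
  qed
qed

lemma summable_large_finite:
  fixes f :: "'a \<Rightarrow> real"
  assumes "f summable_on A" "\<And>x. x \<in> A \<Longrightarrow> f x \<ge> 0" "\<epsilon> > 0"
  shows "finite {x\<in>A. f x \<ge> \<epsilon>}"
proof (rule ccontr)
  assume inf: "infinite {x\<in>A. f x \<ge> \<epsilon>}"
  define N where "N = nat \<lceil>infsum f A / \<epsilon>\<rceil> + 1"
  obtain C where C: "finite C" "card C = N" "C \<subseteq> {x\<in>A. f x \<ge> \<epsilon>}"
    using infinite_arbitrarily_large[OF inf] by blast
  have "sum f C \<le> infsum f A"
    by (rule finite_sum_le_infsum) (use assms C in auto)
  moreover have "sum f C \<ge> sum (\<lambda>_. \<epsilon>) C" by (rule sum_mono) (use C in auto)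
  moreover have "sum (\<lambda>_. \<epsilon>) C = N * \<epsilon>" using C by simp
  moreover have "N * \<epsilon> > infsum f A"
  proof -
    have "real N > infsum f A / \<epsilon>" unfolding N_def by linarith
    thus ?thesis using assms(3) by (simp add: field_simps)
  qed
  ultimately show False by linarith
qed

lemma infsum_fin_supp:
  fixes f :: "'a \<Rightarrow> real"
  assumes "finite S" "S \<subseteq> A" "\<And>x. x \<in> A - S \<Longrightarrow> f x = 0"
  shows "infsum f A = sum f S" "f summable_on A"
proof -
  have "infsum f A = infsum f S" by (rule infsum_cong_neutral) (use assms in auto)
  thus "infsum f A = sum f S" using assms by simp
  have "f summable_on A \<longleftrightarrow> f summable_on S" by (rule summable_on_cong_neutral) (use assms in auto)
  thus "f summable_on A" using assms by simp
qed

lemma bonds_sub: "b \<in> bonds \<Omega> \<Longrightarrow> fst b \<in> Lat \<and> snd b \<in> Lat \<and> cmod (snd b - fst b) = 1 \<and> fst b \<in> \<Omega> \<and> snd b \<in> \<Omega>"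
  unfolding bonds_def by auto

lemma bonds_fin:
  assumes "\<And>b. b \<in> S \<Longrightarrow> norm (fst b) \<le> R" "S \<subseteq> bonds \<Omega>"
  shows "finite S"
proof -
  have "S \<subseteq> (Lat \<inter> cball 0 R) \<times> (Lat \<inter> cball 0 (R + 1))"
  proof
    fix b assume b: "b \<in> S"
    then have bb: "fst b \<in> Lat \<and> snd b \<in> Lat \<and> cmod (snd b - fst b) = 1" using assms bonds_sub by blast
    have "norm (snd b) \<le> norm (fst b) + norm (snd b - fst b)" by (metis norm_triangle_sub add.commute)
    then show "b \<in> (Lat \<inter> cball 0 R) \<times> (Lat \<inter> cball 0 (R + 1))"
      using bb assms(1)[OF b] by (cases b) auto
  qed
  thus ?thesis by (rule finite_subset) (intro finite_cartesian_product lat_finite)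
qed

lemma W0_fin:
  assumes "u \<in> W0 \<Omega>"
  shows "finite {b\<in>bonds \<Omega>. Dif u b \<noteq> 0}"
proof -
  have "bounded (fst ` {b\<in>bonds \<Omega>. Dif u b \<noteq> 0})" using assms unfolding W0_def by simp
  then obtain R where R: "\<And>z. z \<in> fst ` {b\<in>bonds \<Omega>. Dif u b \<noteq> 0} \<Longrightarrow> norm z \<le> R"
    unfolding bounded_iff by blast
  show ?thesis by (rule bonds_fin[of _ R \<Omega>]) (use R in auto)
qed

lemma local_min:
  fixes \<psi> :: "real \<Rightarrow> real"
  assumes "C4 \<psi>" "\<And>x. \<psi> (- x) = \<psi> x" "psi2 \<psi> 0 > 0"
  shows "\<exists>\<epsilon>>0. \<forall>t. \<bar>t\<bar> \<le> \<epsilon> \<longrightarrow> \<psi> t \<ge> \<psi> 0"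
proof -
  have c4: "\<And>k x. k < 4 \<Longrightarrow> ((deriv ^^ k) \<psi>) differentiable (at x)" using assms(1) unfolding C4_def by blast
  have d0: "\<And>x. \<psi> differentiable (at x)" using c4[of 0] by simp
  have d1: "\<And>x. (deriv \<psi>) differentiable (at x)" using c4[of 1] by simp
  have D0: "\<And>x. DERIV \<psi> x :> deriv \<psi> x" using d0 DERIV_deriv_iff_real_differentiable by blast
  have D1: "\<And>x. DERIV (deriv \<psi>) x :> psi2 \<psi> x" unfolding psi2_def
    using d1 DERIV_deriv_iff_real_differentiable by blast
  have m: "DERIV (\<lambda>x. \<psi> (- x)) 0 :> - deriv \<psi> 0"
    using DERIV_mirror[where f=\<psi> and x=0 and y="deriv \<psi> 0"] D0[of 0] by simp
  have fe: "(\<lambda>x. \<psi> (- x)) = \<psi>" using assms(2) by auto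
  have "DERIV \<psi> 0 :> - deriv \<psi> 0" using m unfolding fe .
  from DERIV_unique[OF D0[of 0] this] have dz: "deriv \<psi> 0 = 0" by linarith
  have "isCont (psi2 \<psi>) 0" by (rule psi2_cont[OF assms(1)])
  then obtain r where r: "r > 0" "\<And>t. dist t 0 < r \<Longrightarrow> dist (psi2 \<psi> t) (psi2 \<psi> 0) < psi2 \<psi> 0"
    unfolding continuous_at_eps_delta using assms(3) by blast
  have pos: "psi2 \<psi> t \<ge> 0" if "\<bar>t\<bar> < r" for t
  proof -
    have "\<bar>psi2 \<psi> t - psi2 \<psi> 0\<bar> < psi2 \<psi> 0" using r(2)[of t] that by (simp add: dist_real_def)
    thus ?thesis by linarith
  qed
  have dpos: "deriv \<psi> t \<ge> 0" if "0 \<le> t" "t < r" for t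
  proof -
    have "deriv \<psi> 0 \<le> deriv \<psi> t"
    proof (rule DERIV_nonneg_imp_nondecreasing[OF \<open>0 \<le> t\<close>])
      fix x assume x: "0 \<le> x" "x \<le> t"
      have "\<bar>x\<bar> < r" using x that by simp
      thus "\<exists>y. DERIV (deriv \<psi>) x :> y \<and> y \<ge> 0" using D1[of x] pos[of x] by blast
    qed
    thus ?thesis using dz by simp
  qed
  have main: "\<psi> t \<ge> \<psi> 0" if "0 \<le> t" "t < r" for t
  proof (rule DERIV_nonneg_imp_nondecreasing[OF \<open>0 \<le> t\<close>])
    fix x assume x: "0 \<le> x" "x \<le> t"
    have "x < r" using x that by simp
    thus "\<exists>y. DERIV \<psi> x :> y \<and> y \<ge> 0" using D0[of x] dpos[of x] x by blast
  qed
  show ?thesis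
  proof (intro exI[of _ "r/2"] conjI allI impI)
    show "r/2 > 0" using r by simp
    fix t :: real assume t: "\<bar>t\<bar> \<le> r/2"
    show "\<psi> t \<ge> \<psi> 0"
    proof (cases "t \<ge> 0")
      case True thus ?thesis using main t r by auto
    next
      case False
      hence "\<psi> (- t) \<ge> \<psi> 0" using main t r by auto
      thus ?thesis using assms(2) by simp
    qed
  qed
qed

lemma key_bound:
  fixes \<psi> :: "real \<Rightarrow> real" and u :: "complex \<Rightarrow> real" and lamd :: real
  assumes C4: "C4 \<psi>" and per: "\<And>x. \<psi> (x + 1) = \<psi> x"
    and uW: "u \<in> W12 Lat"
    and hY: "\<forall>v\<in>W0 Lat. hess \<psi> Lat (\<lambda>x. yhat x + u x) v v \<ge> lamd * l2sq Lat v"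
  shows "psi2 \<psi> 0 \<ge> lamd"
proof (rule field_le_epsilon)
  fix e :: real assume e: "e > 0"
  have "isCont (psi2 \<psi>) 0" by (rule psi2_cont[OF C4])
  then obtain \<rho> where \<rho>: "\<rho> > 0" "\<And>t. dist t 0 < \<rho> \<Longrightarrow> dist (psi2 \<psi> t) (psi2 \<psi> 0) < e"
    unfolding continuous_at_eps_delta using e by blast
  have h\<rho>: "\<rho>/2 > 0" using \<rho> by simp
  obtain R1 where R1: "R1 > 0" "\<And>\<xi> \<eta>. norm \<xi> \<ge> R1 \<Longrightarrow> norm (\<eta> - \<xi>) = 1 \<Longrightarrow> (\<exists>k::int. \<bar>yhat \<eta> - yhat \<xi> - k\<bar> < \<rho>/2)"
    using near_int[OF h\<rho>] by blast
  define F where "F = {b\<in>bonds Lat. (\<lambda>b. (Dif u b)\<^sup>2) b \<ge> (\<rho>/2)\<^sup>2}"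
  have sF: "(\<lambda>b. (Dif u b)\<^sup>2) summable_on bonds Lat" using uW unfolding W12_def by simp
  have fF: "finite F" unfolding F_def
    by (rule summable_large_finite[OF sF]) (use h\<rho> in auto)
  have "bounded (fst ` F \<union> snd ` F)" using fF by (intro finite_imp_bounded) auto
  then obtain B where B: "\<And>z. z \<in> fst ` F \<union> snd ` F \<Longrightarrow> norm z \<le> B" unfolding bounded_iff by blast
  define M :: int where "M = \<lceil>R1 + \<bar>B\<bar>\<rceil> + 2"
  define \<xi> where "\<xi> = (a1 + a2) / 3 + of_int M * a1 + of_int 0 * a2"
  have \<xi>L: "\<xi> \<in> Lat" unfolding \<xi>_def Lat_def by blast
  have Re\<xi>: "Re \<xi> = 1/2 + M" unfolding \<xi>_def by (simp add: a1_def a2_def)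
  have Mb: "real_of_int M \<ge> R1 + \<bar>B\<bar> + 2" unfolding M_def by linarith
  have n\<xi>: "norm \<xi> \<ge> Re \<xi>" using abs_Re_le_cmod[of \<xi>] by linarith
  have n\<xi>1: "norm \<xi> \<ge> R1" "norm \<xi> > B" "norm \<xi> > 1" using n\<xi> Re\<xi> Mb R1 by linarith+
  have \<xi>x: "\<xi> \<noteq> xi0" using Re\<xi> Mb R1 unfolding xi0_def by auto
  define v where "v = (\<lambda>x. if x = \<xi> then 1 else (0::real))"
  define S where "S = {b\<in>bonds Lat. Dif v b \<noteq> 0}"
  have Sch: "fst b = \<xi> \<or> snd b = \<xi>" if "b \<in> S" for b
    using that unfolding S_def v_def Dif_def by (auto split: if_splits)
  have bne: "fst b \<noteq> snd b" if "b \<in> bonds Lat" for b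
    using bonds_sub[OF that] by auto
  have Dv2: "(Dif v b)\<^sup>2 = 1" if "b \<in> S" for b
  proof -
    have "fst b \<noteq> snd b" using bne that unfolding S_def by auto
    thus ?thesis using Sch[OF that] unfolding v_def Dif_def by auto
  qed
  have Snorm: "norm (fst b) \<le> norm \<xi> + 1" if "b \<in> S" for b
  proof -
    have bb: "cmod (snd b - fst b) = 1" using bonds_sub that unfolding S_def by blast
    have "norm (fst b) \<le> norm (snd b) + norm (snd b - fst b)" by (metis norm_triangle_sub norm_minus_commute add.commute)
    thus ?thesis using Sch[OF that] bb by auto
  qed
  have fS: "finite S" by (rule bonds_fin[OF Snorm]) (auto simp: S_def)
  have vW: "v \<in> W0 Lat"
  proof -
    have "bounded (fst ` S)" using fS by (intro finite_imp_bounded) auto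
    thus ?thesis unfolding W0_def S_def using \<xi>x by (simp add: v_def)
  qed
  have b0: "(\<xi>, \<xi> + a1) \<in> S"
  proof -
    have "\<xi> + a1 = (a1 + a2) / 3 + of_int (M+1) * a1 + of_int 0 * a2" unfolding \<xi>_def by (simp add: algebra_simps)
    hence "\<xi> + a1 \<in> Lat" unfolding Lat_def by blast
    moreover have "cmod (\<xi> + a1 - \<xi>) = 1" by (simp add: a1_def)
    ultimately have "(\<xi>, \<xi> + a1) \<in> bonds Lat" using \<xi>L unfolding bonds_def by auto
    moreover have "\<xi> + a1 \<noteq> \<xi>" by (simp add: a1_def)
    ultimately show ?thesis unfolding S_def v_def Dif_def by auto
  qed
  have cS: "card S > 0" using fS b0 card_gt_0_iff by blast
  have l2: "l2sq Lat v = real (card S)"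
  proof -
    have "l2sq Lat v = (\<Sum>b\<in>S. (Dif v b)\<^sup>2)" unfolding l2sq_def
      by (rule infsum_fin_supp(1)[OF fS]) (auto simp: S_def)
    also have "\<dots> = (\<Sum>b\<in>S. 1)" using Dv2 by simp
    finally show ?thesis by simp
  qed
  define Y where "Y = (\<lambda>x. yhat x + u x)"
  have hs: "hess \<psi> Lat Y v v = (\<Sum>b\<in>S. psi2 \<psi> (Dif Y b))"
  proof -
    have "hess \<psi> Lat Y v v = (\<Sum>b\<in>S. psi2 \<psi> (Dif Y b) * Dif v b * Dif v b)" unfolding hess_def
      by (rule infsum_fin_supp(1)[OF fS]) (auto simp: S_def)
    also have "\<dots> = (\<Sum>b\<in>S. psi2 \<psi> (Dif Y b))"
      by (rule sum.cong) (use Dv2 in \<open>auto simp: power2_eq_square mult.assoc\<close>)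
    finally show ?thesis .
  qed
  have tb: "psi2 \<psi> (Dif Y b) \<le> psi2 \<psi> 0 + e" if bS: "b \<in> S" for b
  proof -
    have bL: "b \<in> bonds Lat" using bS unfolding S_def by auto
    have bb: "cmod (snd b - fst b) = 1" using bonds_sub[OF bL] by blast
    have "\<exists>k::int. \<bar>yhat (snd b) - yhat (fst b) - k\<bar> < \<rho>/2"
    proof (cases "fst b = \<xi>")
      case True thus ?thesis using R1(2)[of \<xi> "snd b"] bb n\<xi>1 by auto
    next
      case False
      hence sb: "snd b = \<xi>" using Sch[OF bS] by auto
      have "cmod (fst b - \<xi>) = 1" using bb sb by (simp add: norm_minus_commute)
      then obtain k :: int where "\<bar>yhat (fst b) - yhat \<xi> - k\<bar> < \<rho>/2" using R1(2)[of \<xi> "fst b"] n\<xi>1 by auto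
      moreover have "yhat (snd b) - yhat (fst b) - of_int (-k) = - (yhat (fst b) - yhat \<xi> - k)" using sb by simp
      ultimately have "\<bar>yhat (snd b) - yhat (fst b) - of_int (-k)\<bar> < \<rho>/2" by (simp only: abs_minus_cancel)
      thus ?thesis by blast
    qed
    then obtain k :: int where k: "\<bar>yhat (snd b) - yhat (fst b) - k\<bar> < \<rho>/2" by blast
    have "b \<notin> F"
    proof
      assume "b \<in> F"
      hence "norm (fst b) \<le> B" "norm (snd b) \<le> B" using B by auto
      thus False using Sch[OF bS] n\<xi>1 by auto
    qed
    hence "(Dif u b)\<^sup>2 < (\<rho>/2)\<^sup>2" using bL unfolding F_def by auto
    hence "\<bar>Dif u b\<bar>\<^sup>2 < (\<rho>/2)\<^sup>2" by simp
    hence du: "\<bar>Dif u b\<bar> < \<rho>/2" using h\<rho> by (smt (verit) power_mono abs_ge_zero)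
    define t where "t = yhat (snd b) - yhat (fst b) - k + Dif u b"
    have tt: "\<bar>t\<bar> < \<rho>" using k du unfolding t_def by linarith
    have DY: "Dif Y b = t + of_int k" unfolding t_def Y_def Dif_def by simp
    have "psi2 \<psi> (Dif Y b) = psi2 \<psi> t" unfolding DY by (rule psi2_periodic_int) (rule per)
    moreover have "\<bar>psi2 \<psi> t - psi2 \<psi> 0\<bar> < e" using \<rho>(2)[of t] tt by (simp add: dist_real_def)
    ultimately show ?thesis by linarith
  qed
  have "hess \<psi> Lat Y v v \<le> real (card S) * (psi2 \<psi> 0 + e)"
    unfolding hs using sum_bounded_above[of S "\<lambda>b. psi2 \<psi> (Dif Y b)" "psi2 \<psi> 0 + e"] tb by simp
  moreover have "hess \<psi> Lat Y v v \<ge> lamd * real (card S)"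
    using hY vW l2 unfolding Y_def by auto
  ultimately have "real (card S) * lamd \<le> real (card S) * (psi2 \<psi> 0 + e)" by (simp add: mult.commute)
  thus "lamd \<le> psi2 \<psi> 0 + e" using cS by (simp add: mult_le_cancel_left)
qed

theorem mainTheorem3:
  fixes \<psi> :: "real \<Rightarrow> real" and u :: "complex \<Rightarrow> real" and lamd :: real
  assumes "C4 \<psi>" and "\<And>x. \<psi> (x + 1) = \<psi> x" and "\<And>x. \<psi> (- x) = \<psi> x"
    and "u \<in> W12 Lat"
    and "strongly_stable_with \<psi> Lat (\<lambda>x. yhat x + u x) lamd"
  shows "\<forall>\<Omega>. \<Omega> \<subseteq> Lat \<longrightarrow>
           strongly_stable \<psi> \<Omega> (\<lambda>_. 0)
         \<and> (\<forall>v\<in>W0 \<Omega>. hess \<psi> \<Omega> (\<lambda>_. 0) v v = psi2 \<psi> 0 * (\<Sum>\<^sub>\<infinity>b\<in>bonds \<Omega>. (Dif v b)\<^sup>2))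
         \<and> psi2 \<psi> 0 \<ge> lamd \<and> lamd > 0"
proof -
  have lp: "lamd > 0" using assms(5) unfolding strongly_stable_with_def by blast
  have hY: "\<forall>v\<in>W0 Lat. hess \<psi> Lat (\<lambda>x. yhat x + u x) v v \<ge> lamd * l2sq Lat v"
    using assms(5) unfolding strongly_stable_with_def by blast
  have key: "psi2 \<psi> 0 \<ge> lamd" by (rule key_bound[OF assms(1,2,4) hY])
  have pos: "psi2 \<psi> 0 > 0" using key lp by linarith
  obtain \<epsilon> where \<epsilon>: "\<epsilon> > 0" "\<And>t. \<bar>t\<bar> \<le> \<epsilon> \<Longrightarrow> \<psi> t \<ge> \<psi> 0"
    using local_min[OF assms(1,3) pos] by blast
  have hess0: "hess \<psi> \<Omega> (\<lambda>_. 0) v v = psi2 \<psi> 0 * (\<Sum>\<^sub>\<infinity>b\<in>bonds \<Omega>. (Dif v b)\<^sup>2)" for \<Omega> v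
  proof -
    have "hess \<psi> \<Omega> (\<lambda>_. 0) v v = (\<Sum>\<^sub>\<infinity>b\<in>bonds \<Omega>. psi2 \<psi> 0 * (Dif v b)\<^sup>2)"
      unfolding hess_def by (simp add: Dif_def power2_eq_square mult.assoc)
    also have "\<dots> = psi2 \<psi> 0 * (\<Sum>\<^sub>\<infinity>b\<in>bonds \<Omega>. (Dif v b)\<^sup>2)" by (rule infsum_cmult_right')
    finally show ?thesis .
  qed
  have ls: "locally_stable \<psi> \<Omega> (\<lambda>_. 0)" for \<Omega>
    unfolding locally_stable_def
  proof (intro exI[of _ \<epsilon>] conjI ballI impI)
    show "\<epsilon> > 0" by (rule \<epsilon>(1))
    fix w assume wW: "w \<in> W0 \<Omega>" and wn: "sqrt (l2sq \<Omega> w) \<le> \<epsilon>"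
    have fw: "finite {b\<in>bonds \<Omega>. Dif w b \<noteq> 0}" by (rule W0_fin[OF wW])
    have sw: "(\<lambda>b. (Dif w b)\<^sup>2) summable_on bonds \<Omega>"
      by (rule infsum_fin_supp(2)[OF fw]) auto
    have small: "\<bar>Dif w b\<bar> \<le> \<epsilon>" if bb: "b \<in> bonds \<Omega>" for b
    proof -
      have "sum (\<lambda>b. (Dif w b)\<^sup>2) {b} \<le> l2sq \<Omega> w" unfolding l2sq_def
        by (rule finite_sum_le_infsum[OF sw]) (use bb in auto)
      hence "(Dif w b)\<^sup>2 \<le> l2sq \<Omega> w" by simp
      hence "sqrt ((Dif w b)\<^sup>2) \<le> sqrt (l2sq \<Omega> w)" by (rule real_sqrt_le_mono)
      thus ?thesis using wn by simp
    qed
    show "Ediff \<psi> \<Omega> (\<lambda>x. 0 + w x) (\<lambda>_. 0) \<ge> 0" unfolding Ediff_def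
    proof (rule infsum_nonneg)
      fix b assume "b \<in> bonds \<Omega>"
      hence "\<psi> (Dif w b) \<ge> \<psi> 0" using small \<epsilon>(2) by blast
      thus "\<psi> (Dif (\<lambda>x. 0 + w x) b) - \<psi> (Dif (\<lambda>_. 0) b) \<ge> 0" by (simp add: Dif_def)
    qed
  qed
  show ?thesis
  proof (intro allI impI conjI ballI)
    fix \<Omega> :: "complex set" assume "\<Omega> \<subseteq> Lat"
    show "strongly_stable \<psi> \<Omega> (\<lambda>_. 0)" unfolding strongly_stable_def strongly_stable_with_def
      using ls[of \<Omega>] pos hess0 by (auto simp: l2sq_def intro!: exI[of _ "psi2 \<psi> 0"])
  next
    fix \<Omega> v show "hess \<psi> \<Omega> (\<lambda>_. 0) v v = psi2 \<psi> 0 * (\<Sum>\<^sub>\<infinity>b\<in>bonds \<Omega>. (Dif v b)\<^sup>2)" by (rule hess0)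
  qed (use key lp in auto)
qed

end
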